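(* Let $T=(V,E)$ be a finite tree with $V=\{1,\dots,n\}$, rooted at a vertex $v_0$ and equipped with a fixed left-to-right ordering of children, and let $e_i=(p_i,q_i)$, $i=1,\dots,k$, be its edges, where $p_i$ is the parent of $q_i$, enumerated level by level starting from the root and proceeding from left to right at every depth (breadth-first order). Let $N$ be a symmetric positive definite $n\times n$ real matrix and $M=N_T$. For $j=2,\dots,k$ let $A_j=\bigcup_{i=1}^{j-1}\{p_i,q_i\}\setminus\{p_j\}$, $$\sigma_j=M_{p_j,p_j}-M_{p_j,A_j}M_{A_j,A_j}^{-1}M_{A_j,p_j},\qquad \eta_j=M_{p_j,p_j}-M_{p_j,q_j}^2M_{q_j,q_j}^{-1}.$$ Then $M$ is positive definite if and only if $\sigma_j+\eta_j-M_{p_j,p_j}>0$ for every $j=2,\dots,k$.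
   Context: For a symmetric $n\times n$ real matrix $N=(n_{ij})$, $N_T$ is defined by $(N_T)_{ij}=n_{ij}$ if $i=j$ or $(i,j)\in E$, and $0$ otherwise. For index sets $X,Y$, $M_{XY}$ denotes the submatrix of $M$ with rows in $X$ and columns in $Y$; for a single vertex $x$, $M_{x,Y}$ denotes the corresponding row vector and $M_{x,x}$ the diagonal entry. *)

theory Defs
  imports "Jordan_Normal_Form.Gauss_Jordan_Elimination" "Jordan_Normal_Form.DL_Submatrix"
begin

text \<open>Vertices are 0,...,n-1 (labelling immaterial). An ordered rooted tree is given by its
  root v0 and a function ch mapping each vertex to the list of its children, listed
  from left to right.\<close>

definition ordered_rooted_tree :: "nat \<Rightarrow> nat \<Rightarrow> (nat \<Rightarrow> nat list) \<Rightarrow> bool" where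
  "ordered_rooted_tree n v0 ch \<longleftrightarrow>
     v0 < n
   \<and> (\<forall>v. set (ch v) \<subseteq> {0..<n} \<and> distinct (ch v))
   \<and> (\<forall>v. v \<ge> n \<longrightarrow> ch v = [])
   \<and> (\<forall>v<n. v0 \<notin> set (ch v))
   \<and> (\<forall>w<n. w \<noteq> v0 \<longrightarrow> (\<exists>!v. v < n \<and> w \<in> set (ch v)))
   \<and> (\<forall>w<n. (v0, w) \<in> {(u, c). c \<in> set (ch u)}\<^sup>*)"

definition tree_adj :: "(nat \<Rightarrow> nat list) \<Rightarrow> nat \<Rightarrow> nat \<Rightarrow> bool" where
  "tree_adj ch i j \<longleftrightarrow> j \<in> set (ch i) \<or> i \<in> set (ch j)"

fun level :: "(nat \<Rightarrow> nat list) \<Rightarrow> nat \<Rightarrow> nat \<Rightarrow> nat list" where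
  "level ch v0 0 = [v0]"
| "level ch v0 (Suc d) = concat (map ch (level ch v0 d))"

definition bfs_edges :: "nat \<Rightarrow> nat \<Rightarrow> (nat \<Rightarrow> nat list) \<Rightarrow> (nat \<times> nat) list" where
  "bfs_edges n v0 ch =
     concat (map (\<lambda>d. concat (map (\<lambda>p. map (\<lambda>c. (p, c)) (ch p)) (level ch v0 d))) [0..<n])"

definition tree_part :: "(nat \<Rightarrow> nat list) \<Rightarrow> real mat \<Rightarrow> real mat" where
  "tree_part ch N = mat (dim_row N) (dim_col N)
     (\<lambda>(i, j). if i = j \<or> tree_adj ch i j then N $$ (i, j) else 0)"

definition symmetric_mat :: "'a mat \<Rightarrow> bool" where
  "symmetric_mat A \<longleftrightarrow> A\<^sup>T = A"

definition pos_def :: "real mat \<Rightarrow> bool" where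
  "pos_def A \<longleftrightarrow> dim_row A = dim_col A \<and>
     (\<forall>x \<in> carrier_vec (dim_row A). x \<noteq> 0\<^sub>v (dim_row A) \<longrightarrow> x \<bullet> (A *\<^sub>v x) > 0)"

text \<open>Matrix inverse (junk value if the matrix is singular).\<close>
definition inv_mat :: "real mat \<Rightarrow> real mat" where
  "inv_mat A = the (mat_inverse A)"

definition sigma_val :: "real mat \<Rightarrow> nat \<Rightarrow> nat set \<Rightarrow> real" where
  "sigma_val M p A = M $$ (p, p)
     - (submatrix M {p} A * inv_mat (submatrix M A A) * submatrix M A {p}) $$ (0, 0)"

definition eta_val :: "real mat \<Rightarrow> nat \<Rightarrow> nat \<Rightarrow> real" where
  "eta_val M p q = M $$ (p, p) - (M $$ (p, q))\<^sup>2 * inverse (M $$ (q, q))"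

end

theory Submission
  imports Defs "Jordan_Normal_Form.Determinant"
begin

definition qf :: "real mat \<Rightarrow> nat set \<Rightarrow> (nat \<Rightarrow> real) \<Rightarrow> real" where
  "qf M S x = (\<Sum>i\<in>S. \<Sum>j\<in>S. x i * M$$(i,j) * x j)"

definition PDS :: "real mat \<Rightarrow> nat set \<Rightarrow> bool" where
  "PDS M S \<longleftrightarrow> (\<forall>x. (\<exists>i\<in>S. x i \<noteq> 0) \<longrightarrow> qf M S x > 0)"

lemma qf_zero: "(\<forall>i\<in>S. x i = 0) \<Longrightarrow> qf M S x = 0"
  by (simp add: qf_def)

lemma PDS_nonneg: "PDS M S \<Longrightarrow> qf M S x \<ge> 0"
  unfolding PDS_def by (metis less_eq_real_def qf_zero)

lemma qf_cong: "(\<And>i. i \<in> S \<Longrightarrow> x i = y i) \<Longrightarrow> qf M S x = qf M S y"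
  by (simp add: qf_def)

lemma qf_mat_cong: "(\<And>i j. i \<in> S \<Longrightarrow> j \<in> S \<Longrightarrow> M$$(i,j) = M'$$(i,j)) \<Longrightarrow> qf M S x = qf M' S x"
  by (simp add: qf_def)

lemma PDS_mat_cong: "(\<And>i j. i \<in> S \<Longrightarrow> j \<in> S \<Longrightarrow> M$$(i,j) = M'$$(i,j)) \<Longrightarrow> PDS M S = PDS M' S"
  unfolding PDS_def using qf_mat_cong by metis

lemma qf_ext:
  assumes "S \<subseteq> T" "finite T"
  shows "qf M T (\<lambda>i. if i \<in> S then x i else 0) = qf M S x"
proof -
  have "qf M T (\<lambda>i. if i \<in> S then x i else 0) = (\<Sum>i\<in>T. if i \<in> S then (\<Sum>j\<in>S. x i * M$$(i,j) * x j) else 0)"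
    unfolding qf_def
    apply (rule sum.cong, simp)
    apply (auto intro!: sum.mono_neutral_cong_right assms)
    done
  also have "\<dots> = qf M S x" unfolding qf_def
    by (rule sum.mono_neutral_cong_right[OF assms(2) assms(1)]) auto
  finally show ?thesis .
qed

lemma PDS_mono:
  assumes "PDS M T" "S \<subseteq> T" "finite T"
  shows "PDS M S"
  unfolding PDS_def
proof (intro allI impI)
  fix x :: "nat \<Rightarrow> real" assume "\<exists>i\<in>S. x i \<noteq> 0"
  then obtain i where i: "i \<in> S" "x i \<noteq> 0" by blast
  define y where "y = (\<lambda>i. if i \<in> S then x i else 0)"
  have "i \<in> T" "y i \<noteq> 0" using i assms(2) unfolding y_def by auto
  then have "qf M T y > 0" using assms(1) unfolding PDS_def by blast
  then show "qf M S x > 0" using qf_ext[OF assms(2,3)] unfolding y_def by simp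
qed

lemma qf_vec:
  assumes "M \<in> carrier_mat n n"
  shows "vec n x \<bullet> (M *\<^sub>v vec n x) = qf M {0..<n} x"
proof -
  have dr: "dim_row M = n" and dc: "dim_col M = n" using assms by auto
  have e: "(M *\<^sub>v vec n x) $ i = (\<Sum>j\<in>{0..<n}. M$$(i,j) * x j)" if "i < n" for i
    using that dr dc by (simp add: scalar_prod_def row_def)
  have "vec n x \<bullet> (M *\<^sub>v vec n x) = (\<Sum>i\<in>{0..<n}. x i * (\<Sum>j\<in>{0..<n}. M$$(i,j) * x j))"
    unfolding scalar_prod_def using e dr by simp
  also have "\<dots> = qf M {0..<n} x" unfolding qf_def
    by (simp add: sum_distrib_left mult.assoc)
  finally show ?thesis .
qed

lemma pos_def_PDS:
  assumes "M \<in> carrier_mat n n"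
  shows "pos_def M \<longleftrightarrow> PDS M {0..<n}"
proof
  assume a: "pos_def M"
  show "PDS M {0..<n}" unfolding PDS_def
  proof (intro allI impI)
    fix x :: "nat \<Rightarrow> real" assume "\<exists>i\<in>{0..<n}. x i \<noteq> 0"
    then obtain i where i: "i < n" "x i \<noteq> 0" by auto
    have "vec n x $ i \<noteq> 0\<^sub>v n $ i" using i by simp
    then have "vec n x \<noteq> 0\<^sub>v n" by metis
    moreover have "vec n x \<in> carrier_vec (dim_row M)" using assms by simp
    moreover have "dim_row M = n" using assms by simp
    ultimately have "vec n x \<bullet> (M *\<^sub>v vec n x) > 0" using a unfolding pos_def_def by metis
    then show "qf M {0..<n} x > 0" using qf_vec[OF assms] by simp
  qed
next
  assume a: "PDS M {0..<n}"
  show "pos_def M" unfolding pos_def_def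
  proof (intro conjI ballI impI)
    show "dim_row M = dim_col M" using assms by auto
    fix v :: "real vec" assume v: "v \<in> carrier_vec (dim_row M)" "v \<noteq> 0\<^sub>v (dim_row M)"
    have dv: "dim_vec v = n" using v assms by simp
    have vn: "vec n (\<lambda>i. v $ i) = v" by (rule eq_vecI) (simp_all add: dv)
    have "\<exists>i\<in>{0..<n}. v $ i \<noteq> 0"
    proof (rule ccontr)
      assume "\<not> ?thesis"
      then have "v = 0\<^sub>v n" by (intro eq_vecI) (simp_all add: dv)
      moreover have "dim_row M = n" using assms by simp
      ultimately show False using v(2) by simp
    qed
    then have "qf M {0..<n} (\<lambda>i. v $ i) > 0" using a unfolding PDS_def by blast
    then show "v \<bullet> (M *\<^sub>v v) > 0" using qf_vec[OF assms, of "\<lambda>i. v $ i"] unfolding vn by simp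
  qed
qed

lemma PDS_sub:
  assumes "M \<in> carrier_mat n n" "pos_def M" "S \<subseteq> {0..<n}"
  shows "PDS M S"
  using PDS_mono[OF pos_def_PDS[OF assms(1), THEN iffD1, OF assms(2)] assms(3)] by simp

definition idx :: "nat set \<Rightarrow> nat \<Rightarrow> nat" where
  "idx A a = card {b\<in>A. b < a}"

lemma pick_idx:
  assumes "finite A" "a \<in> A"
  shows "pick A (idx A a) = a" "idx A a < card A"
proof -
  show "pick A (idx A a) = a" unfolding idx_def using pick_card_in_set[OF assms(2)] .
  have "{b\<in>A. b < a} \<subset> A" using assms(2) by auto
  then show "idx A a < card A" unfolding idx_def using assms(1) by (simp add: psubset_card_mono)
qed

lemma idx_pick:
  assumes "i < card A"
  shows "pick A i \<in> A" "idx A (pick A i) = i"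
  using pick_in_set_le[OF assms] card_pick_le[OF assms] unfolding idx_def by auto

lemma bij_pick:
  assumes "finite A"
  shows "bij_betw (pick A) {..<card A} A"
proof (rule bij_betw_byWitness[where f' = "idx A"])
  show "\<forall>a\<in>{..<card A}. idx A (pick A a) = a" using idx_pick by auto
  show "\<forall>a'\<in>A. pick A (idx A a') = a'" using pick_idx[OF assms] by auto
  show "pick A ` {..<card A} \<subseteq> A" using idx_pick by auto
  show "idx A ` A \<subseteq> {..<card A}" using pick_idx[OF assms] by auto
qed

lemma sum_pick:
  assumes "finite A"
  shows "(\<Sum>a\<in>A. f a) = (\<Sum>i\<in>{0..<card A}. f (pick A i))"
  using sum.reindex_bij_betw[OF bij_pick[OF assms], of f] by (simp add: lessThan_atLeast0)

lemma qf_sub: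
  assumes "finite A" "A \<subseteq> {0..<n}" "M \<in> carrier_mat n n"
  shows "qf M A x = qf (submatrix M A A) {0..<card A} (\<lambda>i. x (pick A i))"
proof -
  have c: "{i. i < dim_row M \<and> i \<in> A} = A" "{i. i < dim_col M \<and> i \<in> A} = A" using assms by auto
  have "qf M A x = (\<Sum>i\<in>{0..<card A}. \<Sum>j\<in>{0..<card A}. x (pick A i) * M$$(pick A i, pick A j) * x (pick A j))"
    unfolding qf_def by (simp add: sum_pick[OF assms(1)])
  also have "\<dots> = qf (submatrix M A A) {0..<card A} (\<lambda>i. x (pick A i))"
    unfolding qf_def by (intro sum.cong refl) (simp add: submatrix_index c)
  finally show ?thesis .
qed

lemma pick_single: "pick {p} 0 = p" by (simp, rule Least_equality, auto)

lemma schur_ident: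
  assumes M: "M \<in> carrier_mat n n" and sym: "\<And>i j. i < n \<Longrightarrow> j < n \<Longrightarrow> M$$(i,j) = M$$(j,i)"
    and A: "finite A" "A \<subseteq> {0..<n}" and p: "p < n" "p \<notin> A" and pd: "PDS M A"
  shows "\<exists>z. \<forall>x. qf M (insert p A) x = (x p)^2 * sigma_val M p A + qf M A (\<lambda>a. x a + x p * z a)"
proof -
  define m where "m = card A"
  have dr: "dim_row M = n" and dc: "dim_col M = n" using M by auto
  have cA: "{i. i < dim_row M \<and> i \<in> A} = A" "{i. i < dim_col M \<and> i \<in> A} = A" using A dr dc by auto
  have cp: "{i. i < dim_row M \<and> i \<in> {p}} = {p}" "{i. i < dim_col M \<and> i \<in> {p}} = {p}" using p dr dc by auto
  define B where "B = submatrix M A A"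
  define C where "C = submatrix M A {p}"
  define R where "R = submatrix M {p} A"
  have cAm: "card {i. i < dim_row M \<and> i \<in> A} = m" "card {i. i < dim_col M \<and> i \<in> A} = m"
    unfolding cA m_def by auto
  have cp1: "card {i. i < dim_row M \<and> i \<in> {p}} = 1" "card {i. i < dim_col M \<and> i \<in> {p}} = 1"
    unfolding cp by auto
  have B: "B \<in> carrier_mat m m" unfolding B_def by (rule carrier_matI) (simp_all only: dim_submatrix cAm)
  have C: "C \<in> carrier_mat m 1" unfolding C_def by (rule carrier_matI) (simp_all only: dim_submatrix cAm cp1)
  have R: "R \<in> carrier_mat 1 m" unfolding R_def by (rule carrier_matI) (simp_all only: dim_submatrix cAm cp1)
  have Be: "B$$(i,l) = M$$(pick A i, pick A l)" if "i < m" "l < m" for i l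
    unfolding B_def using that by (intro submatrix_index) (simp_all only: cAm)
  have Ce: "C$$(i,0) = M$$(pick A i, p)" if "i < m" for i
  proof -
    have h1: "i < card {i. i < dim_row M \<and> i \<in> A}" using that by (simp only: cAm)
    have h2: "0 < card {j. j < dim_col M \<and> j \<in> {p}}" by (simp only: cp1)
    have "C$$(i,0) = M$$(pick A i, pick {p} 0)"
      unfolding C_def by (rule submatrix_index[OF h1 h2])
    then show ?thesis by (simp only: pick_single)
  qed
  have Re: "R$$(0,l) = M$$(p, pick A l)" if "l < m" for l
  proof -
    have h1: "l < card {i. i < dim_col M \<and> i \<in> A}" using that by (simp only: cAm)
    have h2: "0 < card {j. j < dim_row M \<and> j \<in> {p}}" by (simp only: cp1)
    have "R$$(0,l) = M$$(pick {p} 0, pick A l)"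
      unfolding R_def by (rule submatrix_index[OF h2 h1])
    then show ?thesis by (simp only: pick_single)
  qed
  have detB: "det B \<noteq> 0"
  proof
    assume "det B = 0"
    then obtain v where v: "v \<in> carrier_vec m" "v \<noteq> 0\<^sub>v m" "B *\<^sub>v v = 0\<^sub>v m"
      using det_0_iff_vec_prod_zero[OF B] by blast
    define x where "x = (\<lambda>a. if a \<in> A then v $ idx A a else 0)"
    have xp: "x (pick A i) = v $ i" if "i < m" for i
      using idx_pick[of i A] that unfolding x_def m_def by auto
    have vv: "vec m (\<lambda>i. x (pick A i)) = v" using v xp by (intro eq_vecI) auto
    have "qf M A x = qf B {0..<m} (\<lambda>i. x (pick A i))" unfolding B_def m_def by (rule qf_sub[OF A M])
    also have "\<dots> = v \<bullet> (B *\<^sub>v v)" using qf_vec[OF B, of "\<lambda>i. x (pick A i)"] unfolding vv by simp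
    also have "\<dots> = 0" using v by simp
    finally have q0: "qf M A x = 0" .
    obtain i where i: "i < m" "v $ i \<noteq> 0"
    proof (rule ccontr)
      assume "\<not> thesis"
      then have "\<forall>i<m. v $ i = 0" using that by blast
      then have "v = 0\<^sub>v m" using v(1) by (intro eq_vecI) auto
      then show False using v(2) by simp
    qed
    have "pick A i \<in> A" "x (pick A i) \<noteq> 0" using idx_pick[of i A] i xp unfolding m_def by auto
    then have "qf M A x > 0" using pd unfolding PDS_def by blast
    then show False using q0 by simp
  qed
  have U: "B \<in> Units (ring_mat TYPE(real) m ())" using det_non_zero_imp_unit[OF B detB, of "()"] .
  then obtain Bi where Bi: "mat_inverse B = Some Bi"
  proof (cases "mat_inverse B")
    case None
    then show ?thesis using mat_inverse(1)[OF B None, of "()"] U by blast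
  qed
  have BBi: "B * Bi = 1\<^sub>m m" and Bic: "Bi \<in> carrier_mat m m" using mat_inverse(2)[OF B Bi] by auto
  have invB: "inv_mat B = Bi" unfolding inv_mat_def Bi by simp
  define Z where "Z = Bi * C"
  have Z: "Z \<in> carrier_mat m 1" unfolding Z_def using Bic C by simp
  have BZ: "B * Z = C" unfolding Z_def
    using BBi B Bic C by (simp add: assoc_mult_mat[symmetric, OF B Bic C])
  define z where "z = (\<lambda>a. Z $$ (idx A a, 0))"
  have zp: "z (pick A l) = Z $$ (l, 0)" if "l < m" for l
    using idx_pick[of l A] that unfolding z_def m_def by auto
  define F where "F = (\<lambda>a. \<Sum>b\<in>A. M$$(a,b) * z b)"
  have Fa: "F a = M$$(a,p)" if a: "a \<in> A" for a
  proof -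
    define i where "i = idx A a"
    have i: "i < m" "pick A i = a" using pick_idx[OF A(1) a] unfolding i_def m_def by auto
    have "F a = (\<Sum>l\<in>{0..<m}. M$$(pick A i, pick A l) * z (pick A l))"
      unfolding F_def m_def using i by (simp add: sum_pick[OF A(1)])
    also have "\<dots> = (\<Sum>l\<in>{0..<m}. B$$(i,l) * Z$$(l,0))"
      by (intro sum.cong refl) (simp add: Be zp i)
    also have "\<dots> = (B * Z)$$(i,0)"
      using B Z i by (simp add: index_mult_mat scalar_prod_def row_def col_def)
    also have "\<dots> = M$$(a,p)" unfolding BZ using Ce i by simp
    finally show ?thesis .
  qed
  have sig: "sigma_val M p A = M$$(p,p) - (\<Sum>b\<in>A. M$$(p,b) * z b)"
  proof -
    have "submatrix M {p} A * inv_mat (submatrix M A A) * submatrix M A {p} = R * Z"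
      unfolding R_def[symmetric] B_def[symmetric] C_def[symmetric] invB Z_def
      using R Bic C by (simp add: assoc_mult_mat[OF R Bic C])
    moreover have "(R * Z) $$ (0,0) = (\<Sum>l\<in>{0..<m}. R$$(0,l) * Z$$(l,0))"
      using R Z by (simp add: index_mult_mat scalar_prod_def row_def col_def)
    moreover have "\<dots> = (\<Sum>l\<in>{0..<m}. M$$(p, pick A l) * z (pick A l))"
      by (intro sum.cong refl) (simp add: Re zp)
    moreover have "\<dots> = (\<Sum>b\<in>A. M$$(p,b) * z b)"
      unfolding m_def by (simp add: sum_pick[OF A(1)])
    ultimately show ?thesis unfolding sigma_val_def by simp
  qed
  show ?thesis
  proof (intro exI allI)
    fix x :: "nat \<Rightarrow> real"
    define t where "t = x p"
    define S1 where "S1 = (\<Sum>a\<in>A. x a * M$$(a,p))"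
    have symA: "M$$(a,b) = M$$(b,a)" if "a \<in> A" "b \<in> A" for a b
    proof -
      have "a < n" "b < n" using that A(2) by auto
      then show ?thesis by (rule sym)
    qed
    have symp: "M$$(a,p) = M$$(p,a)" if "a \<in> A" for a
    proof -
      have "a < n" using that A(2) by auto
      then show ?thesis using p(1) by (rule sym)
    qed
    have lhs: "qf M (insert p A) x = t * M$$(p,p) * t + (\<Sum>j\<in>A. t * M$$(p,j) * x j) + (\<Sum>i\<in>A. x i * M$$(i,p) * t) + qf M A x"
      unfolding qf_def t_def using A(1) p(2) by (simp add: sum.distrib)
    have l2: "(\<Sum>j\<in>A. t * M$$(p,j) * x j) = t * S1" unfolding S1_def
      by (simp add: sum_distrib_left symp mult_ac cong: sum.cong)
    have l3: "(\<Sum>i\<in>A. x i * M$$(i,p) * t) = t * S1" unfolding S1_def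
      by (simp add: sum_distrib_left mult_ac)
    have expand: "qf M A (\<lambda>a. x a + t * z a) = qf M A x + t * (\<Sum>i\<in>A. x i * F i)
        + t * (\<Sum>i\<in>A. \<Sum>j\<in>A. z i * M$$(i,j) * x j) + t^2 * (\<Sum>i\<in>A. z i * F i)"
      unfolding qf_def F_def
      by (simp add: sum.distrib sum_distrib_left algebra_simps power2_eq_square)
    have e1: "(\<Sum>i\<in>A. x i * F i) = S1" unfolding S1_def by (simp add: Fa)
    have e2: "(\<Sum>i\<in>A. \<Sum>j\<in>A. z i * M$$(i,j) * x j) = S1"
    proof -
      have "(\<Sum>i\<in>A. \<Sum>j\<in>A. z i * M$$(i,j) * x j) = (\<Sum>j\<in>A. \<Sum>i\<in>A. z i * M$$(i,j) * x j)"
        by (rule sum.swap)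
      also have "\<dots> = (\<Sum>j\<in>A. x j * F j)" unfolding F_def
        by (intro sum.cong refl) (simp add: sum_distrib_left symA mult_ac)
      finally show ?thesis using e1 by simp
    qed
    have e3: "(\<Sum>i\<in>A. z i * F i) = (\<Sum>b\<in>A. M$$(p,b) * z b)"
      by (intro sum.cong refl) (simp add: Fa symp)
    define c where "c = (\<Sum>b\<in>A. M$$(p,b) * z b)"
    have L: "qf M (insert p A) x = t*t*M$$(p,p) + 2*t*S1 + qf M A x" using lhs l2 l3 by simp
    have Rr: "qf M A (\<lambda>a. x a + t * z a) = qf M A x + 2*t*S1 + t*t*c"
      using expand e1 e2 e3 unfolding c_def by (simp add: power2_eq_square)
    show "qf M (insert p A) x = (x p)^2 * sigma_val M p A + qf M A (\<lambda>a. x a + x p * z a)"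
      unfolding t_def[symmetric] sig c_def[symmetric] L Rr by (simp add: algebra_simps power2_eq_square)
  qed
qed

lemma qf_insert:
  assumes "finite S" "q \<notin> S"
  shows "qf M (insert q S) x = x q * M$$(q,q) * x q + (\<Sum>j\<in>S. x q * M$$(q,j) * x j) + (\<Sum>i\<in>S. x i * M$$(i,q) * x q) + qf M S x"
  unfolding qf_def using assms by (simp add: sum.distrib)

lemma main_step:
  assumes M: "M \<in> carrier_mat n n" and sym: "\<And>i j. i < n \<Longrightarrow> j < n \<Longrightarrow> M$$(i,j) = M$$(j,i)"
    and A: "finite A" "A \<subseteq> {0..<n}" and p: "p < n" "p \<notin> A" and q: "q < n" "q \<notin> A" "q \<noteq> p"
    and zq: "\<And>a. a \<in> A \<Longrightarrow> M$$(q,a) = 0" and qq: "M$$(q,q) > 0"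
    and pd: "PDS M A"
  shows "PDS M (insert q (insert p A)) \<longleftrightarrow> sigma_val M p A + eta_val M p q - M$$(p,p) > 0"
proof -
  obtain z where z: "\<And>x. qf M (insert p A) x = (x p)^2 * sigma_val M p A + qf M A (\<lambda>a. x a + x p * z a)"
    using schur_ident[OF M sym A p pd] by blast
  define D where "D = sigma_val M p A + eta_val M p q - M$$(p,p)"
  define d where "d = M$$(p,q)"
  define e where "e = M$$(q,q)"
  have D: "D = sigma_val M p A - d^2 / e" unfolding D_def d_def e_def eta_val_def by (simp add: field_simps)
  have zq': "M$$(a,q) = 0" if "a \<in> A" for a
  proof -
    have "a < n" using that A(2) by auto
    then have "M$$(a,q) = M$$(q,a)" using q(1) by (rule sym)
    then show ?thesis using zq[OF that] by simp
  qed
  have dqp: "M$$(q,p) = d" unfolding d_def using q(1) p(1) by (rule sym)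
  have ident: "qf M (insert q (insert p A)) x = (x p)^2 * D + qf M A (\<lambda>a. x a + x p * z a) + e * (x q + x p * d / e)^2" for x
  proof -
    have nq: "q \<notin> insert p A" using q by auto
    have s1: "(\<Sum>j\<in>insert p A. x q * M$$(q,j) * x j) = x q * d * x p"
      using A(1) p(2) zq dqp by simp
    have s2: "(\<Sum>i\<in>insert p A. x i * M$$(i,q) * x q) = x q * d * x p"
      using A(1) p(2) zq' by (simp add: d_def)
    have "qf M (insert q (insert p A)) x = x q * e * x q + 2 * (x q * d * x p) + qf M (insert p A) x"
      using qf_insert[OF _ nq, of M x] A(1) s1 s2 unfolding e_def by simp
    also have "\<dots> = (x p)^2 * D + qf M A (\<lambda>a. x a + x p * z a) + e * (x q + x p * d / e)^2"
      unfolding z D using qq unfolding e_def[symmetric] by (simp add: field_simps power2_eq_square)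
    finally show ?thesis .
  qed
  have epos: "e > 0" using qq unfolding e_def .
  show ?thesis unfolding D_def[symmetric]
  proof
    assume pdi: "PDS M (insert q (insert p A))"
    define x where "x = (\<lambda>a. if a = p then 1 else if a = q then - d / e else - z a)"
    have xp: "x p = 1" unfolding x_def by simp
    have xq: "x q = - d / e" unfolding x_def using q by simp
    have "qf M A (\<lambda>a. x a + x p * z a) = 0"
      by (rule qf_zero) (use p q in \<open>auto simp: x_def\<close>)
    then have "qf M (insert q (insert p A)) x = D" using ident[of x] xp xq by simp
    moreover have "qf M (insert q (insert p A)) x > 0" using pdi xp unfolding PDS_def by force
    ultimately show "D > 0" by simp
  next
    assume Dpos: "D > 0"
    show "PDS M (insert q (insert p A))" unfolding PDS_def
    proof (intro allI impI)
      fix x :: "nat \<Rightarrow> real"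
      assume nz: "\<exists>i\<in>insert q (insert p A). x i \<noteq> 0"
      have a1: "qf M A (\<lambda>a. x a + x p * z a) \<ge> 0" using pd by (rule PDS_nonneg)
      have a2: "e * (x q + x p * d / e)^2 \<ge> 0" using epos by simp
      show "qf M (insert q (insert p A)) x > 0"
      proof (cases "x p = 0")
        case False
        then have "(x p)^2 * D > 0" using Dpos by simp
        then show ?thesis unfolding ident using a1 a2 by linarith
      next
        case True
        then have id2: "qf M (insert q (insert p A)) x = qf M A x + e * (x q)^2"
          unfolding ident by simp
        from nz True consider "x q \<noteq> 0" | "\<exists>i\<in>A. x i \<noteq> 0" by auto
        then show ?thesis
        proof cases
          case 1
          then have "e * (x q)^2 > 0" using epos by simp
          then show ?thesis unfolding id2 using PDS_nonneg[OF pd, of x] by linarith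
        next
          case 2
          then have "qf M A x > 0" using pd unfolding PDS_def by blast
          then show ?thesis unfolding id2 using epos by (simp add: add_pos_nonneg)
        qed
      qed
    qed
  qed
qed

lemma distinct_concat_map:
  assumes "distinct xs" "\<And>x. x \<in> set xs \<Longrightarrow> distinct (f x)"
    "\<And>x y. x \<in> set xs \<Longrightarrow> y \<in> set xs \<Longrightarrow> x \<noteq> y \<Longrightarrow> set (f x) \<inter> set (f y) = {}"
  shows "distinct (concat (map f xs))"
  using assms by (induction xs) auto

locale ort =
  fixes n v0 :: nat and ch :: "nat \<Rightarrow> nat list"
  assumes T: "ordered_rooted_tree n v0 ch"
begin

definition R where "R = {(u, c). c \<in> set (ch u)}"
definition par where "par w = (THE v. v < n \<and> w \<in> set (ch v))"
definition dep where "dep w = (SOME d. w \<in> set (level ch v0 d))"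
definition vs where "vs = concat (map (level ch v0) [0..<n])"

lemma v0n: "v0 < n" using T unfolding ordered_rooted_tree_def by blast
lemma ch_sub: "c \<in> set (ch u) \<Longrightarrow> c < n"
proof -
  assume a: "c \<in> set (ch u)"
  have "set (ch u) \<subseteq> {0..<n}" using T unfolding ordered_rooted_tree_def by blast
  then show ?thesis using a by auto
qed
lemma ch_dist: "distinct (ch u)" using T unfolding ordered_rooted_tree_def by auto
lemma ch_par_lt: "c \<in> set (ch u) \<Longrightarrow> u < n"
  using T unfolding ordered_rooted_tree_def by (metis empty_iff empty_set not_le)
lemma v0_not_ch: "c \<in> set (ch u) \<Longrightarrow> c \<noteq> v0"
  using T ch_par_lt unfolding ordered_rooted_tree_def by blast
lemma uniq_par: "c \<in> set (ch u) \<Longrightarrow> c \<in> set (ch u') \<Longrightarrow> u = u'"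
proof -
  assume a: "c \<in> set (ch u)" "c \<in> set (ch u')"
  have "c < n" "c \<noteq> v0" using a ch_sub v0_not_ch by auto
  then have "\<exists>!v. v < n \<and> c \<in> set (ch v)" using T unfolding ordered_rooted_tree_def by blast
  then show "u = u'" using a ch_par_lt by blast
qed
lemma par_eq: "c \<in> set (ch u) \<Longrightarrow> par c = u"
  unfolding par_def using uniq_par ch_par_lt by (intro the_equality) auto
lemma reach: "w < n \<Longrightarrow> (v0, w) \<in> R\<^sup>*"
  using T unfolding ordered_rooted_tree_def R_def by blast

lemma level_Suc_iff: "w \<in> set (level ch v0 (Suc d)) \<longleftrightarrow> (\<exists>u \<in> set (level ch v0 d). w \<in> set (ch u))"
  by auto

lemma level_sub: "w \<in> set (level ch v0 d) \<Longrightarrow> w < n"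
  by (cases d) (auto simp: v0n ch_sub)

lemma level_relpow: "w \<in> set (level ch v0 d) \<longleftrightarrow> (v0, w) \<in> R ^^ d"
proof (induction d arbitrary: w)
  case 0
  then show ?case by auto
next
  case (Suc d)
  have Rm: "(u, c) \<in> R \<longleftrightarrow> c \<in> set (ch u)" for u c by (simp add: R_def)
  show ?case unfolding level_Suc_iff relpow.simps(2)
    using Suc.IH by (auto simp: relcomp_unfold Rm)
qed

lemma level_unique: "w \<in> set (level ch v0 d) \<Longrightarrow> w \<in> set (level ch v0 d') \<Longrightarrow> d = d'"
proof (induction d arbitrary: d' w)
  case 0
  then have "w = v0" by simp
  then show ?case using 0 v0_not_ch by (cases d') auto
next
  case (Suc d)
  then obtain u where u: "u \<in> set (level ch v0 d)" "w \<in> set (ch u)" by auto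
  show ?case
  proof (cases d')
    case 0
    then show ?thesis using Suc.prems u v0_not_ch by auto
  next
    case (Suc d'')
    then obtain u' where u': "u' \<in> set (level ch v0 d'')" "w \<in> set (ch u')" using Suc.prems by auto
    have "u = u'" using uniq_par u u' by blast
    then show ?thesis using Suc.IH[OF u(1)] u' Suc by simp
  qed
qed

lemma dep_eq: "w \<in> set (level ch v0 d) \<Longrightarrow> dep w = d"
  unfolding dep_def by (rule some_equality) (auto intro: level_unique)

lemma finite_R: "finite R"
proof -
  have "R \<subseteq> {0..<n} \<times> {0..<n}" unfolding R_def using ch_sub ch_par_lt by auto
  then show ?thesis by (rule finite_subset) simp
qed

lemma card_R: "card R < n"
proof -
  have "R \<subseteq> (\<lambda>c. (par c, c)) ` ({0..<n} - {v0})"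
    unfolding R_def using ch_sub v0_not_ch par_eq by force
  then have "card R \<le> card ((\<lambda>c. (par c, c)) ` ({0..<n} - {v0}))" by (rule card_mono[rotated]) simp
  also have "\<dots> \<le> card ({0..<n} - {v0})" by (rule card_image_le) simp
  also have "\<dots> < n" using v0n by simp
  finally show ?thesis .
qed

lemma level_lt: "w \<in> set (level ch v0 d) \<Longrightarrow> d < n"
proof -
  assume a: "w \<in> set (level ch v0 d)"
  then have "(v0, w) \<in> R\<^sup>*" using level_relpow by (meson relpow_imp_rtrancl)
  then obtain d' where "d' \<le> card R" "(v0, w) \<in> R ^^ d'" using rtrancl_finite_eq_relpow[OF finite_R] by blast
  then have "d' = d" using a level_relpow level_unique by blast
  then show "d < n" using \<open>d' \<le> card R\<close> card_R by simp
qed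

lemma in_some_level: "w < n \<Longrightarrow> \<exists>d. w \<in> set (level ch v0 d)"
  using reach rtrancl_imp_relpow level_relpow by blast

lemma level_distinct: "distinct (level ch v0 d)"
proof (induction d)
  case 0 then show ?case by simp
next
  case (Suc d)
  show ?case unfolding level.simps
    by (rule distinct_concat_map[OF Suc]) (auto simp: ch_dist dest: uniq_par)
qed

lemma level_n: "level ch v0 n = []"
  using level_lt by (cases "level ch v0 n") (auto, metis list.set_intros(1) less_irrefl)

lemma set_vs: "set vs = {0..<n}"
  unfolding vs_def using level_sub in_some_level level_lt by fastforce

lemma distinct_vs: "distinct vs"
  unfolding vs_def
  by (rule distinct_concat_map) (auto simp: level_distinct dest: level_unique)

lemma length_vs: "length vs = n"
  using distinct_card[OF distinct_vs] set_vs by simp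

lemma vs_cons: "vs = v0 # concat (map (level ch v0) [1..<n])"
  unfolding vs_def using v0n by (simp add: upt_conv_Cons)

lemma sorted_dep_aux: "sorted (map dep (concat (map (level ch v0) [0..<m])))"
proof (induction m)
  case 0 then show ?case by simp
next
  case (Suc m)
  have "map dep (level ch v0 m) = map (\<lambda>_. m) (level ch v0 m)"
    by (rule map_cong) (auto simp: dep_eq)
  then have s: "sorted (map dep (level ch v0 m))" by (simp add: map_replicate_const)
  show ?case using Suc s
    by (auto simp: sorted_append dep_eq)
qed

lemma sorted_dep: "sorted (map dep vs)"
  unfolding vs_def by (rule sorted_dep_aux)

lemma dep_vs: "w \<in> set vs \<Longrightarrow> w \<in> set (level ch v0 (dep w))"
  unfolding vs_def using dep_eq by auto

lemma pos_mono:
  assumes "i < n" "j < n" "dep (vs ! i) < dep (vs ! j)"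
  shows "i < j"
proof (rule ccontr)
  assume "\<not> i < j"
  then have "j \<le> i" by simp
  then have "(map dep vs) ! j \<le> (map dep vs) ! i"
    using sorted_dep assms length_vs by (intro sorted_nth_mono) auto
  then show False using assms length_vs by simp
qed

lemma dep_child: "c \<in> set (ch u) \<Longrightarrow> u < n \<Longrightarrow> dep c = Suc (dep u)"
proof -
  assume a: "c \<in> set (ch u)" "u < n"
  obtain d where d: "u \<in> set (level ch v0 d)" using in_some_level a(2) by blast
  then have "c \<in> set (level ch v0 (Suc d))" using a by auto
  then show ?thesis using d dep_eq by simp
qed

lemma vs0: "vs ! 0 = v0" using vs_cons by simp

lemma vs_nonroot:
  assumes "0 < i" "i < n"
  shows "vs ! i \<in> set (ch (par (vs ! i)))"
proof -
  have "vs ! i \<in> set vs" using assms length_vs by simp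
  then have w: "vs ! i \<in> set (level ch v0 (dep (vs ! i)))" by (rule dep_vs)
  have "vs ! i \<noteq> vs ! 0" using nth_eq_iff_index_eq[OF distinct_vs, of i 0] assms length_vs by simp
  then have "vs ! i \<noteq> v0" using vs0 by simp
  then have "dep (vs ! i) \<noteq> 0" using w by (cases "dep (vs ! i)") auto
  then obtain d where "dep (vs ! i) = Suc d" by (cases "dep (vs ! i)") auto
  then obtain u where "vs ! i \<in> set (ch u)" using w by auto
  then show ?thesis using par_eq by simp
qed

lemma par_pos:
  assumes "0 < i" "i < n"
  obtains j where "j < i" "vs ! j = par (vs ! i)"
proof -
  have c: "vs ! i \<in> set (ch (par (vs ! i)))" using vs_nonroot assms .
  have pn: "par (vs ! i) < n" using ch_par_lt[OF c] .
  then obtain j where j: "j < n" "vs ! j = par (vs ! i)" using set_vs length_vs by (metis atLeastLessThan_iff in_set_conv_nth zero_le)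
  have "dep (vs ! j) < dep (vs ! i)" using dep_child[OF c pn] j by simp
  then have "j < i" using pos_mono j assms by blast
  then show ?thesis using that j by blast
qed

definition es where "es = bfs_edges n v0 ch"

lemma es_eq: "es = map (\<lambda>w. (par w, w)) (tl vs)"
proof -
  let ?g = "\<lambda>w. (par w, w)"
  have E: "concat (map (\<lambda>p. map (\<lambda>c. (p, c)) (ch p)) L) = map ?g (level ch v0 d')"
    if "L = level ch v0 d" "d' = Suc d" for L d d'
  proof -
    have "map ?g (level ch v0 d') = concat (map (\<lambda>p. map ?g (ch p)) L)"
      using that by (simp add: map_concat comp_def)
    also have "\<dots> = concat (map (\<lambda>p. map (\<lambda>c. (p, c)) (ch p)) L)"
      by (intro arg_cong[where f = concat] map_cong refl) (auto simp: par_eq)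
    finally show ?thesis by simp
  qed
  have "es = concat (map (\<lambda>d. map ?g (level ch v0 (Suc d))) [0..<n])"
    unfolding es_def bfs_edges_def using E by simp
  also have "\<dots> = map ?g (concat (map (level ch v0) (map Suc [0..<n])))"
    by (simp add: map_concat comp_def)
  also have "\<dots> = map ?g (concat (map (level ch v0) [1..<n]))"
    using v0n by (simp add: map_Suc_upt level_n)
  also have "\<dots> = map ?g (tl vs)" using vs_cons by simp
  finally show ?thesis .
qed

lemma length_es: "length es = n - 1"
  unfolding es_eq using length_vs by simp

lemma es_nth: "i < length es \<Longrightarrow> es ! i = (par (vs ! Suc i), vs ! Suc i)"
  unfolding es_eq using length_vs by (simp add: nth_tl)

definition W where "W j = (\<Union>i<j. {fst (es!i), snd (es!i)})"

lemma mem_take: "x \<in> set (take m vs) \<longleftrightarrow> (\<exists>l<m. l < n \<and> x = vs ! l)"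
  unfolding in_set_conv_nth using length_vs by auto

lemma W_Suc: "W (Suc j) = insert (snd (es!j)) (insert (fst (es!j)) (W j))"
  unfolding W_def lessThan_Suc by (simp add: insert_commute)

lemma W_1: "W 1 = {fst (es!0), snd (es!0)}"
  unfolding W_def by (simp add: lessThan_Suc)

lemma es_le: "i < length es \<Longrightarrow> Suc i < n"
  using length_es by simp

lemma fst_pos:
  assumes "i < length es"
  obtains l where "l < Suc i" "fst (es ! i) = vs ! l"
proof -
  have h: "0 < Suc i" "Suc i < n" using es_le[OF assms] by auto
  obtain l where l: "l < Suc i" "vs ! l = par (vs ! Suc i)" using par_pos[OF h] by blast
  have "fst (es ! i) = vs ! l" using l(2) es_nth[OF assms] by simp
  then show thesis using that l(1) by blast
qed

lemma edge_ch: "i < length es \<Longrightarrow> snd (es!i) \<in> set (ch (fst (es!i)))"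
  using vs_nonroot[of "Suc i"] es_le es_nth by simp

lemma edge_lt: "i < length es \<Longrightarrow> fst (es!i) < n \<and> snd (es!i) < n"
  using edge_ch ch_sub ch_par_lt by blast

lemma edge_ne: "i < length es \<Longrightarrow> fst (es!i) \<noteq> snd (es!i)"
  using edge_ch[of i] edge_lt[of i] dep_child by (metis n_not_Suc_n)

lemma W_eq:
  assumes "1 \<le> j" "j \<le> length es"
  shows "W j = set (take (Suc j) vs)"
proof
  show "W j \<subseteq> set (take (Suc j) vs)"
  proof
    fix x assume "x \<in> W j"
    then obtain i where i: "i < j" "x = fst (es!i) \<or> x = snd (es!i)" unfolding W_def by auto
    have il: "i < length es" using i assms by simp
    show "x \<in> set (take (Suc j) vs)"
    proof (cases "x = snd (es!i)")
      case True
      then show ?thesis unfolding mem_take using es_nth[OF il] es_le[OF il] i by auto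
    next
      case False
      then have x: "x = fst (es!i)" using i by auto
      obtain l where l: "l < Suc i" "fst (es ! i) = vs ! l" using fst_pos[OF il] .
      have "l < Suc j" "l < n" using l es_le[OF il] i(1) by auto
      then show ?thesis unfolding mem_take x using l(2) by blast
    qed
  qed
next
  show "set (take (Suc j) vs) \<subseteq> W j"
  proof
    fix x assume "x \<in> set (take (Suc j) vs)"
    then obtain l where l: "l < Suc j" "l < n" "x = vs ! l" unfolding mem_take by auto
    show "x \<in> W j"
    proof (cases l)
      case 0
      have e0: "0 < length es" using assms by linarith
      obtain l' where "l' < Suc 0" "fst (es ! 0) = vs ! l'" using fst_pos[OF e0] .
      then have "x = fst (es ! 0)" using l 0 by simp
      moreover have "(0::nat) < j" using assms by linarith
      ultimately show ?thesis unfolding W_def by blast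
    next
      case (Suc l')
      have "l' < length es" using l Suc assms by simp
      then have "x = snd (es ! l')" using es_nth l Suc by simp
      moreover have "l' < j" using l Suc by simp
      ultimately show ?thesis unfolding W_def by blast
    qed
  qed
qed

lemma W_sub: "j \<le> length es \<Longrightarrow> W j \<subseteq> {0..<n}"
  unfolding W_def using edge_lt by fastforce

lemma p_in:
  assumes "1 \<le> j" "j < length es"
  shows "fst (es!j) \<in> W j"
proof -
  obtain l where "l < Suc j" "fst (es ! j) = vs ! l" using fst_pos assms(2) .
  then show ?thesis unfolding W_eq[OF assms(1) less_imp_le[OF assms(2)]] mem_take
    using es_le[OF assms(2)] by auto
qed

lemma q_notin:
  assumes "1 \<le> j" "j < length es"
  shows "snd (es!j) \<notin> W j"
proof
  assume "snd (es!j) \<in> W j"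
  then obtain l where l: "l < Suc j" "l < n" "snd (es!j) = vs ! l"
    unfolding W_eq[OF assms(1) less_imp_le[OF assms(2)]] mem_take by auto
  have "vs ! Suc j = vs ! l" using l es_nth[OF assms(2)] by simp
  then have "Suc j = l" using nth_eq_iff_index_eq[OF distinct_vs] l es_le[OF assms(2)] length_vs by simp
  then show False using l by simp
qed

lemma q_adj:
  assumes "1 \<le> j" "j < length es" "u \<in> W j" "tree_adj ch (snd (es!j)) u"
  shows "u = fst (es!j)"
proof -
  let ?q = "snd (es!j)"
  obtain l where l: "l < Suc j" "l < n" "u = vs ! l"
    using assms(3) unfolding W_eq[OF assms(1) less_imp_le[OF assms(2)]] mem_take by auto
  have qv: "?q = vs ! Suc j" using es_nth[OF assms(2)] by simp
  show ?thesis
  proof (cases "u \<in> set (ch ?q)")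
    case True
    have "?q < n" using edge_lt assms(2) by blast
    then have "dep u = Suc (dep ?q)" using dep_child True by blast
    then have "Suc j < l" using pos_mono[of "Suc j" l] l qv es_le[OF assms(2)] by simp
    then show ?thesis using l by simp
  next
    case False
    then have "?q \<in> set (ch u)" using assms(4) unfolding tree_adj_def by blast
    then have "par ?q = u" by (rule par_eq)
    moreover have "par ?q = fst (es!j)" using es_nth[OF assms(2)] by simp
    ultimately show ?thesis by simp
  qed
qed

lemma W_full: "1 \<le> length es \<Longrightarrow> W (length es) = {0..<n}"
  using W_eq[of "length es"] length_es length_vs set_vs by simp

lemma es_empty: "length es = 0 \<Longrightarrow> {0..<n} = {v0}"
  using length_es v0n by auto

end

lemma UN_shift: "(\<Union>i\<in>{1..<Suc m}. g (i - 1)) = (\<Union>i<m. g i)"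
proof (intro equalityI subsetI)
  fix x assume "x \<in> (\<Union>i\<in>{1..<Suc m}. g (i - 1))"
  then obtain i where "i \<in> {1..<Suc m}" "x \<in> g (i - 1)" by blast
  then show "x \<in> (\<Union>i<m. g i)" by (intro UN_I[of "i - 1"]) auto
next
  fix x assume "x \<in> (\<Union>i<m. g i)"
  then obtain i where "i < m" "x \<in> g i" by blast
  then show "x \<in> (\<Union>i\<in>{1..<Suc m}. g (i - 1))" by (intro UN_I[of "Suc i"]) auto
qed

theorem corollary6:
  fixes n v0 :: nat and ch :: "nat \<Rightarrow> nat list" and N :: "real mat"
  assumes "ordered_rooted_tree n v0 ch"
    and "N \<in> carrier_mat n n" and "symmetric_mat N" and "pos_def N"
  shows "pos_def (tree_part ch N) \<longleftrightarrow>
    (let M = tree_part ch N; es = bfs_edges n v0 ch; k = length es;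
         p = (\<lambda>j. fst (es ! (j - 1))); q = (\<lambda>j. snd (es ! (j - 1)));
         A = (\<lambda>j. (\<Union>i\<in>{1..<j}. {p i, q i}) - {p j})
     in \<forall>j\<in>{2..k}. sigma_val M (p j) (A j) + eta_val M (p j) (q j) - M $$ (p j, p j) > 0)"
proof -
  interpret t: ort n v0 ch by (rule ort.intro) (rule assms(1))
  define M where "M = tree_part ch N"
  have Nc: "dim_row N = n" "dim_col N = n" using assms(2) by auto
  have Mc: "M \<in> carrier_mat n n" unfolding M_def tree_part_def using Nc by simp
  have Me: "M$$(i,j) = (if i = j \<or> tree_adj ch i j then N$$(i,j) else 0)" if "i < n" "j < n" for i j
    unfolding M_def tree_part_def using that Nc by simp
  have Nsym: "N$$(i,j) = N$$(j,i)" if "i < n" "j < n" for i j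
  proof -
    have "N$$(i,j) = (transpose_mat N)$$(i,j)" using assms(3) unfolding symmetric_mat_def by simp
    also have "\<dots> = N$$(j,i)" using that Nc by simp
    finally show ?thesis .
  qed
  have adj_sym: "tree_adj ch i j = tree_adj ch j i" for i j unfolding tree_adj_def by auto
  have Msym: "M$$(i,j) = M$$(j,i)" if "i < n" "j < n" for i j
    using Me[OF that] Me[OF that(2,1)] Nsym[OF that] adj_sym[of i j] by auto
  have NPD: "PDS N S" if "S \<subseteq> {0..<n}" for S using PDS_sub[OF assms(2) assms(4) that] .
  have diag: "M$$(a,a) > 0" if "a < n" for a
  proof -
    have "PDS N {a}" using NPD that by simp
    then have "qf N {a} (\<lambda>_. 1) > 0" unfolding PDS_def by simp
    then show ?thesis using Me[OF that that] unfolding qf_def by simp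
  qed
  define es where "es = t.es"
  have es_def': "es = bfs_edges n v0 ch" unfolding es_def t.es_def ..
  define k where "k = length es"
  define D where "D j = sigma_val M (fst (es!j)) (t.W j - {fst (es!j)}) + eta_val M (fst (es!j)) (snd (es!j)) - M$$(fst (es!j), fst (es!j))" for j
  have Wfin: "finite (t.W j)" for j unfolding t.W_def by simp
  have IND: "1 \<le> j \<Longrightarrow> j \<le> k \<Longrightarrow> (PDS M (t.W j) \<longleftrightarrow> (\<forall>i\<in>{1..<j}. D i > 0))" for j
  proof (induction j)
    case 0 then show ?case by simp
  next
    case (Suc j)
    show ?case
    proof (cases "j = 0")
      case True
      have k0: "0 < length t.es" using Suc.prems unfolding k_def es_def by linarith
      have W1: "t.W 1 = {fst (t.es!0), snd (t.es!0)}" by (rule t.W_1)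
      have ad: "tree_adj ch (fst (t.es!0)) (snd (t.es!0))" using t.edge_ch[OF k0] unfolding tree_adj_def by simp
      have lt: "fst (t.es!0) < n" "snd (t.es!0) < n" using t.edge_lt[OF k0] by auto
      have "PDS M (t.W 1) = PDS N (t.W 1)"
      proof (rule PDS_mat_cong)
        fix a b assume ab: "a \<in> t.W 1" "b \<in> t.W 1"
        then have "a < n" "b < n" using lt W1 by auto
        moreover have "a = b \<or> tree_adj ch a b" using ab W1 ad adj_sym by auto
        ultimately show "M$$(a,b) = N$$(a,b)" using Me by simp
      qed
      moreover have "PDS N (t.W 1)" using NPD lt W1 by simp
      ultimately show ?thesis using True by simp
    next
      case False
      have j1: "1 \<le> j" and jk: "j < length t.es" using False Suc.prems unfolding k_def es_def by auto
      define p where "p = fst (t.es!j)"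
      define q where "q = snd (t.es!j)"
      define A where "A = t.W j - {p}"
      have pW: "p \<in> t.W j" unfolding p_def by (rule t.p_in[OF j1 jk])
      have qW: "q \<notin> t.W j" unfolding q_def by (rule t.q_notin[OF j1 jk])
      have WS: "t.W (Suc j) = insert q (insert p A)"
        unfolding t.W_Suc A_def p_def[symmetric] q_def[symmetric] using pW by auto
      have Wsub: "t.W j \<subseteq> {0..<n}" using t.W_sub jk by simp
      have pq: "p < n" "q < n" using t.edge_lt[OF jk] unfolding p_def q_def by auto
      have qp: "q \<noteq> p" using t.edge_ne[OF jk] unfolding p_def q_def by simp
      have Afin: "finite A" unfolding A_def using Wfin by simp
      have Asub: "A \<subseteq> {0..<n}" unfolding A_def using Wsub by auto
      have zq: "M$$(q,a) = 0" if a: "a \<in> A" for a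
      proof -
        have aW: "a \<in> t.W j" "a \<noteq> p" using a unfolding A_def by auto
        have "\<not> tree_adj ch q a"
          using t.q_adj[OF j1 jk aW(1)] aW(2) unfolding p_def q_def by auto
        moreover have "q \<noteq> a" using qW aW by auto
        moreover have "a < n" using aW Wsub by auto
        ultimately show ?thesis using Me pq by simp
      qed
      have Dj: "D j = sigma_val M p A + eta_val M p q - M$$(p,p)"
        unfolding D_def A_def p_def q_def es_def ..
      have step: "PDS M A \<Longrightarrow> (PDS M (t.W (Suc j)) \<longleftrightarrow> D j > 0)"
        unfolding WS Dj
        by (rule main_step[OF Mc Msym Afin Asub pq(1) _ pq(2) _ qp zq diag[OF pq(2)]])
           (auto simp: A_def qW)
      have IH: "PDS M (t.W j) \<longleftrightarrow> (\<forall>i\<in>{1..<j}. D i > 0)" using Suc.IH j1 Suc.prems by simp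
      have mA: "PDS M (t.W j) \<Longrightarrow> PDS M A" using PDS_mono[OF _ _ Wfin] unfolding A_def by blast
      have sj: "{1..<Suc j} = insert j {1..<j}" using j1 by auto
      show ?thesis
      proof
        assume a: "PDS M (t.W (Suc j))"
        have "PDS M (t.W j)" using PDS_mono[OF a _ Wfin] unfolding t.W_Suc by blast
        then show "\<forall>i\<in>{1..<Suc j}. D i > 0" using IH mA step a unfolding sj by blast
      next
        assume a: "\<forall>i\<in>{1..<Suc j}. D i > 0"
        then have "PDS M (t.W j)" using IH unfolding sj by blast
        then show "PDS M (t.W (Suc j))" using mA step a unfolding sj by blast
      qed
    qed
  qed
  have RHS: "(let M = tree_part ch N; es = bfs_edges n v0 ch; k = length es;
         p = (\<lambda>j. fst (es ! (j - 1))); q = (\<lambda>j. snd (es ! (j - 1)));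
         A = (\<lambda>j. (\<Union>i\<in>{1..<j}. {p i, q i}) - {p j})
     in \<forall>j\<in>{2..k}. sigma_val M (p j) (A j) + eta_val M (p j) (q j) - M $$ (p j, p j) > 0)
     \<longleftrightarrow> (\<forall>i\<in>{1..<k}. D i > 0)"
  proof -
    have Weq: "(\<Union>i\<in>{1..<Suc m}. {fst (es ! (i - 1)), snd (es ! (i - 1))}) = t.W m" for m
      unfolding t.W_def es_def by (rule UN_shift)
    have "(\<forall>j\<in>{2..k}. sigma_val M (fst (es ! (j - 1))) ((\<Union>i\<in>{1..<j}. {fst (es ! (i - 1)), snd (es ! (i - 1))}) - {fst (es ! (j - 1))})
            + eta_val M (fst (es ! (j - 1))) (snd (es ! (j - 1))) - M $$ (fst (es ! (j - 1)), fst (es ! (j - 1))) > 0)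
          \<longleftrightarrow> (\<forall>i\<in>{1..<k}. D i > 0)" (is "?L \<longleftrightarrow> ?R")
    proof
      assume L: ?L
      show ?R
      proof
        fix i assume i: "i \<in> {1..<k}"
        then have "Suc i \<in> {2..k}" by auto
        then show "D i > 0" using L[rule_format, of "Suc i"] unfolding D_def Weq[of i, symmetric] es_def by simp
      qed
    next
      assume R: ?R
      show ?L
      proof
        fix j assume j: "j \<in> {2..k}"
        then obtain i where i: "j = Suc i" "i \<in> {1..<k}" by (cases j) auto
        show "sigma_val M (fst (es ! (j - 1))) ((\<Union>i\<in>{1..<j}. {fst (es ! (i - 1)), snd (es ! (i - 1))}) - {fst (es ! (j - 1))})
            + eta_val M (fst (es ! (j - 1))) (snd (es ! (j - 1))) - M $$ (fst (es ! (j - 1)), fst (es ! (j - 1))) > 0"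
        proof -
          have Wj: "(\<Union>i\<in>{1..<j}. {fst (es ! (i - 1)), snd (es ! (i - 1))}) = t.W i"
            using Weq[of i] i(1) by simp
          have ji: "j - 1 = i" using i(1) by simp
          show ?thesis unfolding Wj ji using R i(2) unfolding D_def es_def by simp
        qed
      qed
    qed
    then show ?thesis unfolding Let_def M_def[symmetric] es_def'[symmetric] k_def[symmetric] .
  qed
  have LHS: "pos_def (tree_part ch N) \<longleftrightarrow> PDS M {0..<n}"
    unfolding M_def[symmetric] by (rule pos_def_PDS[OF Mc])
  show ?thesis unfolding LHS RHS
  proof (cases "k = 0")
    case True
    then have "{0..<n} = {v0}" using t.es_empty unfolding k_def es_def by simp
    moreover have "PDS M {v0} = PDS N {v0}"
      by (rule PDS_mat_cong) (use t.v0n Me in auto)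
    moreover have "PDS N {v0}" using NPD t.v0n by simp
    ultimately show "PDS M {0..<n} \<longleftrightarrow> (\<forall>i\<in>{1..<k}. D i > 0)" using True by simp
  next
    case False
    then have "1 \<le> length t.es" unfolding k_def es_def by linarith
    then have "{0..<n} = t.W k" using t.W_full unfolding k_def es_def by simp
    then show "PDS M {0..<n} \<longleftrightarrow> (\<forall>i\<in>{1..<k}. D i > 0)" using IND[of k] False by simp
  qed
qed

end
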